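(* Let $h,k$ be integers with $k>0$, $\gcd(h,k)=1$ and $h+k$ odd. Then $$B_{1}(h,k)=(1-h)\bigl(4s(h,2k)+4s(2h,k)-10s(h,k)\bigr).$$
   Context: $[x]$ denotes the greatest integer $\le x$, and $((x))=x-[x]-\tfrac12$ if $x\notin\mathbb{Z}$, $((x))=0$ if $x\in\mathbb{Z}$. For integers $a,b$ with $b>0$: the Dedekind sum is $s(a,b)=\sum_{j=1}^{b-1}\left(\left(\frac{aj}{b}\right)\right)\left(\left(\frac{j}{b}\right)\right)$, and (for $\gcd(a,b)=1$) $$B_{1}(a,b)=\sum_{j=1}^{b-1}(-1)^{j+\left[\frac{aj}{b}\right]}\left[\frac{aj}{b}\right].$$ *)

theory Defs
  imports Complex_Main
begin

definition saw :: "real \<Rightarrow> real" where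
  "saw x = (if x \<in> \<int> then 0 else x - of_int \<lfloor>x\<rfloor> - 1/2)"

definition dedekind_sum :: "int \<Rightarrow> int \<Rightarrow> real" where
  "dedekind_sum a b =
     (\<Sum>j\<in>{1..b-1}. saw (of_int (a*j) / of_int b) * saw (of_int j / of_int b))"

definition B1 :: "int \<Rightarrow> int \<Rightarrow> int" where
  "B1 a b =
     (\<Sum>j\<in>{1..b-1}. let e = \<lfloor>of_int (a*j) / (of_int b :: real)\<rfloor>
                    in (if even (j + e) then 1 else -1) * e)"

end

theory Submission
  imports Defs
begin

lemma saw_int: "x \<in> \<int> \<Longrightarrow> saw x = 0" by (simp add: saw_def)

lemma saw_eq:
  assumes "of_int m < x" "x < of_int m + 1"
  shows "saw x = x - of_int m - 1/2"
proof -
  have fl: "\<lfloor>x\<rfloor> = m" using assms by (intro floor_unique) auto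
  have "x \<notin> \<int>"
  proof
    assume "x \<in> \<int>" then obtain c where c: "x = of_int c" by (auto elim: Ints_cases)
    with assms have "m < c" "c < m + 1" by linarith+
    then show False by linarith
  qed
  then show ?thesis using fl by (simp add: saw_def)
qed

lemma saw_half: "saw (of_int m + 1/2) = 0"
  by (subst saw_eq[of m]) auto

lemma Ints_add_int_iff: "x + of_int m \<in> \<int> \<longleftrightarrow> x \<in> (\<int>::real set)"
  by (metis Ints_add Ints_diff Ints_of_int add_diff_cancel)

lemma saw_add_int: "saw (x + of_int m) = saw x"
proof (cases "x \<in> \<int>")
  case True then show ?thesis using Ints_add_int_iff by (simp add: saw_def)
next
  case False
  then have "x + of_int m \<notin> \<int>" using Ints_add_int_iff by blast
  then show ?thesis using False by (simp add: saw_def)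
qed

lemma saw_neg: "saw (-x) = - saw x"
proof (cases "x \<in> \<int>")
  case True then show ?thesis by (simp add: saw_def)
next
  case False
  have "of_int \<lfloor>x\<rfloor> \<noteq> x" using False by (metis Ints_of_int)
  then have a: "of_int \<lfloor>x\<rfloor> < x" "x < of_int \<lfloor>x\<rfloor> + 1"
    using of_int_floor_le[of x] by linarith+
  have "saw x = x - of_int \<lfloor>x\<rfloor> - 1/2" using a by (rule saw_eq)
  moreover have "saw (-x) = -x - of_int (-\<lfloor>x\<rfloor> - 1) - 1/2"
    by (rule saw_eq) (use a in \<open>simp; linarith\<close>)+
  ultimately show ?thesis by simp
qed

lemma saw_bounds:
  assumes "x \<notin> \<int>"
  shows "of_int \<lfloor>x\<rfloor> < x" "x < of_int \<lfloor>x\<rfloor> + 1"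
proof -
  have "of_int \<lfloor>x\<rfloor> \<noteq> x" using assms by (metis Ints_of_int)
  then show "of_int \<lfloor>x\<rfloor> < x" "x < of_int \<lfloor>x\<rfloor> + 1"
    using of_int_floor_le[of x] by linarith+
qed

lemma saw_dup: "saw x + saw (x + 1/2) = saw (2*x)"
proof -
  define m where "m = \<lfloor>2*x\<rfloor>"
  obtain p where p: "m = 2*p \<or> m = 2*p+1" by (metis oddE evenE)
  have m1: "of_int m \<le> 2*x" "2*x < of_int m + 1" unfolding m_def by linarith+
  show ?thesis
  proof (cases "2*x = of_int m")
    case True
    then have s2: "saw (2*x) = 0" by (simp add: saw_int)
    from p show ?thesis
    proof
      assume "m = 2*p"
      then have "x = of_int p" using True by simp
      then show ?thesis using s2 saw_half[of p] by (simp add: saw_int)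
    next
      assume "m = 2*p+1"
      then have x: "x = of_int p + 1/2" using True by simp
      have "x + 1/2 = of_int (p+1)" using x by simp
      then have "saw (x+1/2) = 0" by (simp add: saw_int)
      moreover have "saw x = 0" using x saw_half[of p] by simp
      ultimately show ?thesis using s2 by simp
    qed
  next
    case False
    then have m2: "of_int m < 2*x" using m1 by linarith
    have s2: "saw (2*x) = 2*x - of_int m - 1/2" using m2 m1 by (intro saw_eq) auto
    from p show ?thesis
    proof
      assume mp: "m = 2*p"
      have "saw x = x - of_int p - 1/2" using m2 m1 mp by (intro saw_eq) auto
      moreover have "saw (x+1/2) = x + 1/2 - of_int p - 1/2" using m2 m1 mp by (intro saw_eq) auto
      ultimately show ?thesis using s2 mp by simp
    next
      assume mp: "m = 2*p+1"
      have "saw x = x - of_int p - 1/2" using m2 m1 mp by (intro saw_eq) auto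
      moreover have "saw (x+1/2) = x + 1/2 - of_int (p+1) - 1/2" using m2 m1 mp by (intro saw_eq) auto
      ultimately show ?thesis using s2 mp by simp
    qed
  qed
qed

lemma sign_saw:
  assumes "x \<notin> \<int>"
  shows "(if even \<lfloor>x\<rfloor> then 1 else -1 :: real) = 2 * saw x - 4 * saw (x/2)"
proof -
  define m where "m = \<lfloor>x\<rfloor>"
  have b: "of_int m < x" "x < of_int m + 1" using saw_bounds[OF assms] m_def by auto
  have sx: "saw x = x - of_int m - 1/2" using b by (rule saw_eq)
  obtain p where p: "m = 2*p \<or> m = 2*p+1" by (metis oddE evenE)
  from p show ?thesis
  proof
    assume mp: "m = 2*p"
    have "saw (x/2) = x/2 - of_int p - 1/2" using b mp by (intro saw_eq) auto
    then show ?thesis using sx mp m_def by simp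
  next
    assume mp: "m = 2*p+1"
    have "saw (x/2) = x/2 - of_int p - 1/2" using b mp by (intro saw_eq) auto
    then show ?thesis using sx mp m_def by simp
  qed
qed

lemma div_Ints_iff:
  assumes "b \<noteq> 0"
  shows "(of_int a / of_int b :: real) \<in> \<int> \<longleftrightarrow> b dvd a"
proof
  assume "of_int a / of_int b \<in> (\<int>::real set)"
  then obtain c where "of_int a / of_int b = (of_int c :: real)" by (auto elim: Ints_cases)
  then have "(of_int a :: real) = of_int (b * c)" using assms by (simp add: field_simps)
  then have "a = b*c" by linarith
  then show "b dvd a" by simp
next
  assume "b dvd a" then obtain c where "a = b*c" by auto
  then show "of_int a / of_int b \<in> (\<int>::real set)" using assms by simp
qed

lemma sum_int_to_nat:
  fixes f :: "int \<Rightarrow> 'a::comm_monoid_add"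
  assumes "f 0 = 0"
  shows "sum f {1..int n - 1} = (\<Sum>j<n. f (int j))"
proof -
  have e: "{1..int n - 1} = int ` {1..<n}"
  proof
    show "{1..int n - 1} \<subseteq> int ` {1..<n}"
    proof
      fix x assume "x \<in> {1..int n - 1}"
      then have "x = int (nat x)" "nat x \<in> {1..<n}" by auto
      then show "x \<in> int ` {1..<n}" by blast
    qed
  qed auto
  have "sum f {1..int n - 1} = (\<Sum>j\<in>{1..<n}. f (int j))"
    unfolding e by (subst sum.reindex) auto
  also have "\<dots> = (\<Sum>j\<in>{0..<n}. f (int j))"
    using sum_shift_lb_Suc0_0_upt[of "\<lambda>j. f (int j)" n] assms by simp
  finally show ?thesis by (simp add: atLeast0LessThan)
qed

lemma sum_split_add: fixes n :: nat and f :: "nat \<Rightarrow> 'a::comm_monoid_add" shows "(\<Sum>j<m+n. f j) = (\<Sum>j<m. f j) + (\<Sum>j<n. f (j+m))"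
  by (induction n) (auto simp: add_ac)

lemma sum_even_odd: fixes n :: nat shows "(\<Sum>j<2*n. f j) = (\<Sum>i<n. f (2*i) + f (2*i+1))"
  by (induction n) (auto simp: add.assoc)

lemma sum_refl_int:
  fixes f :: "int \<Rightarrow> 'a::comm_monoid_add"
  shows "sum f {1..k-1} = sum (\<lambda>j. f (k-j)) {1..k-1}"
  by (rule sum.reindex_bij_witness[of _ "\<lambda>j. k-j" "\<lambda>j. k-j"]) auto

lemma saw_sum_zero:
  fixes a k :: int
  assumes "k > 0"
  shows "(\<Sum>j\<in>{1..k-1}. saw (of_int (a*j)/of_int k)) = 0"
proof -
  let ?S = "(\<Sum>j\<in>{1..k-1}. saw (of_int (a*j)/of_int k))"
  have "?S = (\<Sum>j\<in>{1..k-1}. saw (of_int (a*(k-j))/of_int k))" by (rule sum_refl_int)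
  also have "\<dots> = (\<Sum>j\<in>{1..k-1}. - saw (of_int (a*j)/of_int k))"
  proof (rule sum.cong)
    fix j assume "j \<in> {1..k-1}"
    have "of_int (a*(k-j))/of_int k = - (of_int (a*j)/of_int k) + (of_int a :: real)"
      using assms by (simp add: field_simps)
    then show "saw (of_int (a*(k-j))/of_int k) = - saw (of_int (a*j)/of_int k)"
      by (metis saw_add_int saw_neg)
  qed simp
  also have "\<dots> = - ?S" by (simp add: sum_negf)
  finally show ?thesis by simp
qed

definition DS :: "int \<Rightarrow> nat \<Rightarrow> real" where
  "DS a n = (\<Sum>j<n. saw (real_of_int a * real j / real n) * saw (real j / real n))"

lemma saw0: "saw 0 = 0" by (simp add: saw_def)

lemma ds_conv: "n > 0 \<Longrightarrow> dedekind_sum a (int n) = DS a n"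
  unfolding dedekind_sum_def DS_def
  by (subst sum_int_to_nat) (simp_all add: saw0)

lemma saw_sum_zero_nat:
  assumes "n > 0"
  shows "(\<Sum>j<n. saw (real_of_int a * real j / real n)) = 0"
proof -
  have "(\<Sum>j\<in>{1..int n-1}. saw (of_int (a*j)/of_int (int n))) = 0"
    using assms by (intro saw_sum_zero) auto
  then show ?thesis by (subst (asm) sum_int_to_nat) (simp_all add: saw0)
qed

lemma saw_frac: "0 < j \<Longrightarrow> j < n \<Longrightarrow> saw (real j / real n) = real j / real n - 1/2"
  by (subst saw_eq[of 0]) auto

lemma ds_linear:
  assumes "n > 0"
  shows "DS a n = (\<Sum>j<n. real j / real n * saw (real_of_int a * real j / real n))"
proof -
  have "DS a n = (\<Sum>j<n. (real j / real n - 1/2) * saw (real_of_int a * real j / real n))"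
    unfolding DS_def
  proof (rule sum.cong)
    fix j assume "j \<in> {..<n}"
    then show "saw (real_of_int a * real j / real n) * saw (real j / real n) =
      (real j / real n - 1/2) * saw (real_of_int a * real j / real n)"
      by (cases "j = 0") (auto simp: saw_frac saw0)
  qed simp
  also have "\<dots> = (\<Sum>j<n. real j / real n * saw (real_of_int a * real j / real n))
       - (1/2) * (\<Sum>j<n. saw (real_of_int a * real j / real n))"
    by (simp add: algebra_simps sum_subtractf sum_distrib_left)
  finally show ?thesis using saw_sum_zero_nat[OF assms] by simp
qed

lemma step_d:
  assumes n: "n > 0" and H: "odd H"
  shows "(\<Sum>j<n. saw (of_int H * real j / (2 * real n))) = DS H n - 2 * DS H (2*n)"
proof -
  obtain q where q: "H = 2*q+1" using H by (metis oddE)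
  define t where "t j = saw (of_int H * real j / (2 * real n)) * saw (real j / (2 * real n))" for j
  define g where "g j = saw (of_int H * real j / (2 * real n))" for j
  define S where "S j = saw (of_int H * real j / real n)" for j
  have pt: "t j + t (j+n) = real j / (2 * real n) * S j - g j / 2" if j: "j < n" for j
  proof (cases "j = 0")
    case True
    have "of_int H * real n / (2 * real n) = of_int q + (1/2::real)" using n q by (simp add: field_simps)
    then have "saw (of_int H * real n / (2 * real n)) = 0" by (simp add: saw_half)
    then show ?thesis using True by (simp add: t_def g_def saw0)
  next
    case False
    have a1: "saw (real j / (2 * real n)) = real j / (2 * real n) - 1/2"
      using False j by (subst saw_eq[of 0]) auto
    have a2: "saw (real (j+n) / (2 * real n)) = real j / (2 * real n)"
      using False j by (subst saw_eq[of 0]) (auto simp: field_simps)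
    have "of_int H * real (j+n) / (2 * real n) = (of_int H * real j / (2 * real n) + 1/2) + of_int q"
      using n q by (simp add: field_simps)
    then have "g (j+n) = saw (of_int H * real j / (2 * real n) + 1/2)"
      by (simp add: g_def saw_add_int)
    also have "\<dots> = S j - g j"
      using saw_dup[of "of_int H * real j / (2 * real n)"] by (simp add: S_def g_def)
    finally have a3: "g (j+n) = S j - g j" .
    have "t j + t (j+n) = g j * (real j / (2 * real n) - 1/2) + g (j+n) * (real j / (2 * real n))"
      unfolding t_def g_def using a1 a2 by simp
    then have "t j + t (j+n) = g j * (real j / (2 * real n) - 1/2) + (S j - g j) * (real j / (2 * real n))"
      using a3 by simp
    then show ?thesis using n by (simp add: field_simps)
  qed
  have "DS H (2*n) = (\<Sum>j<2*n. t j)" unfolding DS_def t_def by simp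
  also have "\<dots> = (\<Sum>j<n+n. t j)" by (simp only: mult_2)
  also have "\<dots> = (\<Sum>j<n. t j + t (j+n))" by (simp add: sum_split_add sum.distrib)
  also have "\<dots> = (\<Sum>j<n. real j / (2 * real n) * S j - g j / 2)" by (rule sum.cong) (auto simp: pt)
  also have "\<dots> = (1/2) * (\<Sum>j<n. real j / real n * S j) - (1/2) * (\<Sum>j<n. g j)"
    by (simp add: sum_subtractf sum_distrib_left sum_divide_distrib)
  also have "(\<Sum>j<n. real j / real n * S j) = DS H n"
    using ds_linear[OF n, of H] by (simp add: S_def)
  finally show ?thesis by (simp add: g_def)
qed

lemma step_e:
  assumes n: "n > 0"
  shows "DS h (2*n) + DS (h + int n) (2*n) = 3 * DS h n - DS (2*h) n"
proof -
  define u where "u j = saw (real j / (2*real n)) *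
     (saw (of_int h * real j / (2*real n)) + saw (of_int (h + int n) * real j / (2*real n)))" for j
  define v where "v j = saw (real j / (2*real n)) * saw (of_int h * real j / real n)" for j
  have "DS h (2*n) + DS (h + int n) (2*n) = (\<Sum>j<2*n. u j)"
    unfolding DS_def u_def sum.distrib[symmetric] by (rule sum.cong) (simp_all add: distrib_left mult.commute)
  also have "\<dots> = (\<Sum>i<n. u (2*i) + u (2*i+1))" by (rule sum_even_odd)
  also have "\<dots> = (\<Sum>i<n. 2 * (saw (of_int h * real i / real n) * saw (real i / real n)) +
        (v (2*i+1) + v (2*i)) - saw (of_int (2*h) * real i / real n) * saw (real i / real n))"
  proof (rule sum.cong)
    fix i assume "i \<in> {..<n}"
    have e1: "of_int (h + int n) * real (2*i) / (2*real n) = of_int h * real i / real n + of_int (int i)"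
      using n by (simp add: field_simps)
    have e2: "of_int h * real (2*i) / (2*real n) = of_int h * real i / real n"
      using n by (simp add: field_simps)
    have e3: "real (2*i) / (2*real n) = real i / real n" using n by simp
    have u1: "u (2*i) = 2 * (saw (of_int h * real i / real n) * saw (real i / real n))"
      unfolding u_def by (simp only: e1 e2 e3 saw_add_int) simp
    have e4: "of_int (h + int n) * real (2*i+1) / (2*real n)
       = of_int h * real (2*i+1) / (2*real n) + 1/2 + of_int (int i)"
      using n by (simp add: field_simps)
    have u2: "u (2*i+1) = v (2*i+1)"
    proof -
      have "saw (of_int h * real (2*i+1) / (2*real n)) + saw (of_int (h + int n) * real (2*i+1) / (2*real n))
          = saw (of_int h * real (2*i+1) / real n)"
      proof -
        have eq: "2 * (of_int h * real (2*i+1) / (2*real n)) = of_int h * real (2*i+1) / real n"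
          using n by simp
        show ?thesis unfolding e4 saw_add_int
          using saw_dup[of "of_int h * real (2*i+1) / (2*real n)", unfolded eq] .
      qed
      then show ?thesis unfolding u_def v_def by simp
    qed
    have v0: "v (2*i) = saw (of_int (2*h) * real i / real n) * saw (real i / real n)"
      unfolding v_def using n by (simp add: field_simps)
    show "u (2*i) + u (2*i+1) = 2 * (saw (of_int h * real i / real n) * saw (real i / real n)) +
        (v (2*i+1) + v (2*i)) - saw (of_int (2*h) * real i / real n) * saw (real i / real n)"
      using u1 u2 v0 by simp
  qed simp
  also have "\<dots> = 2 * DS h n + (\<Sum>j<2*n. v j) - DS (2*h) n"
    unfolding DS_def sum_even_odd[of v]
    by (simp add: sum.distrib sum_subtractf sum_distrib_left)
  also have "(\<Sum>j<2*n. v j) = DS h n"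
  proof -
    have "(\<Sum>j<2*n. v j) = (\<Sum>j<n+n. v j)" by (simp only: mult_2)
    also have "\<dots> = (\<Sum>j<n. v j + v (j+n))" by (simp add: sum_split_add sum.distrib)
    also have "\<dots> = DS h n" unfolding DS_def
    proof (rule sum.cong)
      fix j assume "j \<in> {..<n}"
      have e5: "of_int h * real (j+n) / real n = of_int h * real j / real n + of_int h"
        using n by (simp add: field_simps)
      have e6: "real (j+n) / (2*real n) = real j / (2*real n) + 1/2"
        using n by (simp add: field_simps)
      have e7: "2 * (real j / (2*real n)) = real j / real n" using n by simp
      show "v j + v (j+n) = saw (real_of_int h * real j / real n) * saw (real j / real n)"
        unfolding v_def e5 e6 saw_add_int
        by (subst saw_dup[of "real j / (2*real n)", unfolded e7, symmetric]) (simp add: algebra_simps)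
    qed simp
    finally show ?thesis .
  qed
  finally show ?thesis by simp
qed

lemma ds_shift: "n > 0 \<Longrightarrow> DS (h + int n) n = DS h n"
  unfolding DS_def
proof (rule sum.cong)
  fix j assume "n > 0" "j \<in> {..<n}"
  then have "of_int (h + int n) * real j / real n = of_int h * real j / real n + of_int (int j)"
    by (simp add: field_simps)
  then show "saw (of_int (h + int n) * real j / real n) * saw (real j / real n) =
        saw (of_int h * real j / real n) * saw (real j / real n)"
    by (simp only: saw_add_int)
qed simp

lemma not_dvd_lemma:
  fixes a k j :: int
  assumes "coprime a k" "0 < j" "j < k"
  shows "\<not> k dvd a * j"
proof
  assume "k dvd a * j"
  then have "k dvd j" using assms(1) by (metis coprime_commute coprime_dvd_mult_right_iff)
  then show False using assms(2,3) zdvd_imp_le by fastforce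
qed

theorem theorem18:
  fixes h k :: int
  assumes "k > 0" and "gcd h k = 1" and "odd (h + k)"
  shows "real_of_int (B1 h k) =
           (1 - real_of_int h) * (4 * dedekind_sum h (2*k) + 4 * dedekind_sum (2*h) k
                                  - 10 * dedekind_sum h k)"
proof -
  define n where "n = nat k"
  have kn: "k = int n" and n: "n > 0" using assms(1) by (auto simp: n_def)
  define H where "H = h + k"
  have cop: "coprime h k" using assms(2) by (simp add: coprime_iff_gcd_eq_1)
  have copH: "coprime H k" using assms(2) unfolding H_def by (simp add: coprime_iff_gcd_eq_1)
  define e where "e j = (h*j) div k" for j
  define \<epsilon> where "\<epsilon> j = (if even (j + e j) then 1 else -1 :: int)" for j
  have B1e: "B1 h k = (\<Sum>j\<in>{1..k-1}. \<epsilon> j * e j)"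
    unfolding B1_def \<epsilon>_def e_def Let_def floor_divide_of_int_eq ..
  have refl: "e (k-j) = h - 1 - e j \<and> \<epsilon> (k-j) = \<epsilon> j" if j: "j \<in> {1..k-1}" for j
  proof -
    have nd: "\<not> k dvd h*j" using not_dvd_lemma[OF cop] j by auto
    then have "(h*j) mod k \<noteq> 0" by auto
    have "e (k-j) = ((-(h*j)) + h*k) div k" unfolding e_def by (simp add: algebra_simps)
    also have "\<dots> = h + (-(h*j)) div k" by (rule div_mult_self1) (use assms(1) in simp)
    also have "\<dots> = h - 1 - e j"
      unfolding e_def using \<open>(h*j) mod k \<noteq> 0\<close> assms(1) by (simp add: zdiv_zminus1_eq_if)
    finally have ee: "e (k-j) = h - 1 - e j" .
    have "even ((k-j) + e (k-j)) \<longleftrightarrow> even (j + e j)"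
    proof -
      have "(k - j) + e (k-j) + (j + e j) = (h + k - 1)" using ee by simp
      moreover have "even (h + k - 1)" using assms(3) by simp
      ultimately show ?thesis by (metis even_add)
    qed
    then show ?thesis using ee unfolding \<epsilon>_def by simp
  qed
  have "B1 h k = (\<Sum>j\<in>{1..k-1}. \<epsilon> (k-j) * e (k-j))" unfolding B1e by (rule sum_refl_int)
  also have "\<dots> = (\<Sum>j\<in>{1..k-1}. (h-1) * \<epsilon> j - \<epsilon> j * e j)"
    by (rule sum.cong) (auto simp: refl algebra_simps)
  also have "\<dots> = (h-1) * (\<Sum>j\<in>{1..k-1}. \<epsilon> j) - B1 h k"
    unfolding B1e by (simp add: sum_subtractf sum_distrib_left)
  finally have B2: "2 * B1 h k = (h-1) * (\<Sum>j\<in>{1..k-1}. \<epsilon> j)" by simp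
  define G where "G = (\<Sum>j<n. saw (of_int H * real j / (2 * real n)))"
  have Eval: "real_of_int (\<Sum>j\<in>{1..k-1}. \<epsilon> j) = - 4 * G"
  proof -
    have "real_of_int (\<Sum>j\<in>{1..k-1}. \<epsilon> j) =
        (\<Sum>j\<in>{1..k-1}. 2 * saw (of_int (H*j)/of_int k) - 4 * saw (of_int (H*j)/of_int (2*k)))"
      unfolding of_int_sum
    proof (rule sum.cong)
      fix j assume j: "j \<in> {1..k-1}"
      have ni: "of_int (H*j)/of_int k \<notin> (\<int>::real set)"
        using div_Ints_iff[of k "H*j"] not_dvd_lemma[OF copH] j assms(1) by auto
      have fl: "\<lfloor>of_int (H*j)/(of_int k :: real)\<rfloor> = j + e j"
      proof -
        have "\<lfloor>of_int (H*j)/(of_int k :: real)\<rfloor> = (H*j) div k" by (rule floor_divide_of_int_eq)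
        also have "\<dots> = (h*j + j*k) div k" unfolding H_def by (simp add: algebra_simps)
        also have "\<dots> = j + e j" unfolding e_def using assms(1) by simp
        finally show ?thesis .
      qed
      have h2: "of_int (H*j)/of_int k / 2 = (of_int (H*j)/of_int (2*k) :: real)" by simp
      show "real_of_int (\<epsilon> j) = 2 * saw (of_int (H*j)/of_int k) - 4 * saw (of_int (H*j)/of_int (2*k))"
        using sign_saw[OF ni] unfolding fl h2 \<epsilon>_def by (auto split: if_splits)
    qed simp
    also have "\<dots> = 2 * (\<Sum>j\<in>{1..k-1}. saw (of_int (H*j)/of_int k))
         - 4 * (\<Sum>j\<in>{1..k-1}. saw (of_int (H*j)/of_int (2*k)))"
      by (simp add: sum_subtractf sum_distrib_left)
    also have "(\<Sum>j\<in>{1..k-1}. saw (of_int (H*j)/of_int k)) = 0"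
      using saw_sum_zero assms(1) by blast
    also have "(\<Sum>j\<in>{1..k-1}. saw (of_int (H*j)/of_int (2*k))) = G"
      unfolding G_def kn by (subst sum_int_to_nat) (simp_all add: saw0)
    finally show ?thesis by simp
  qed
  have oddH: "odd H" using assms(3) H_def by simp
  have d: "G = DS H n - 2 * DS H (2*n)" unfolding G_def by (rule step_d[OF n oddH])
  have e: "DS h (2*n) + DS H (2*n) = 3 * DS h n - DS (2*h) n"
    unfolding H_def kn by (rule step_e[OF n])
  have sh: "DS H n = DS h n" unfolding H_def kn by (rule ds_shift[OF n])
  have c1: "dedekind_sum h (2*k) = DS h (2*n)" unfolding kn using ds_conv[of "2*n" h] n by simp
  have c2: "dedekind_sum (2*h) k = DS (2*h) n" unfolding kn using ds_conv[of n "2*h"] n by simp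
  have c3: "dedekind_sum h k = DS h n" unfolding kn using ds_conv[of n h] n by simp
  have "2 * real_of_int (B1 h k) = (real_of_int h - 1) * (- 4 * G)"
    using arg_cong[OF B2, of real_of_int] Eval by simp
  moreover have G': "G = 2 * DS h (2*n) + 2 * DS (2*h) n - 5 * DS h n" using d e sh by linarith
  ultimately have "2 * real_of_int (B1 h k) =
     (real_of_int h - 1) * (- 4 * (2 * DS h (2*n) + 2 * DS (2*h) n - 5 * DS h n))" by simp
  then show ?thesis unfolding c1 c2 c3 by (simp add: algebra_simps)
qed

end
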